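(* Let $\theta\ge0$, $\omega\in\mathbb R$, $a\in\mathbb R$. For every polynomial $f$, $$\bigl(\exp(a\Delta_{\theta,\omega})f\bigr)(z)=\bigl(\exp(\omega^{-1}(e^{a\omega}-1)\Delta_\theta)f\bigr)(e^{a\omega}z),$$ where all operator exponentials are defined by their (here finite) power series; i.e. $\exp(a\Delta_{\theta,\omega})=\exp(a\omega zD)\exp(\omega^{-1}(e^{a\omega}-1)\Delta_\theta)$ on polynomials.
   Context: $D=d/dz$, $\Delta_{\theta,\omega}=(\theta+\omega z)D+zD^2$, $\Delta_\theta=(\theta+zD)D$; $\exp(\gamma A)f=\sum_{k\ge0}\frac{\gamma^k}{k!}A^kf$, and $\exp(\gamma zD)f(z)=f(e^\gamma z)$. For $\omega=0$, $\omega^{-1}(e^{a\omega}-1)$ means $a$. *)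

theory Defs
  imports "HOL-Analysis.Analysis" "HOL-Computational_Algebra.Polynomial"
begin

text \<open>Operators on polynomials (complex coefficients, variable z).
  D = pderiv, multiplication by z = multiplication by [:0,1:].\<close>

definition Delta_tw :: "real \<Rightarrow> real \<Rightarrow> complex poly \<Rightarrow> complex poly" where
  "Delta_tw \<theta> \<omega> f =
     smult (complex_of_real \<theta>) (pderiv f)
   + smult (complex_of_real \<omega>) ([:0, 1:] * pderiv f)
   + [:0, 1:] * pderiv (pderiv f)"

definition Delta_t :: "real \<Rightarrow> complex poly \<Rightarrow> complex poly" where
  "Delta_t \<theta> f = smult (complex_of_real \<theta>) (pderiv f) + [:0, 1:] * pderiv (pderiv f)"

definition op_exp_term :: "real \<Rightarrow> (complex poly \<Rightarrow> complex poly) \<Rightarrow> complex poly \<Rightarrow> complex \<Rightarrow> nat \<Rightarrow> complex" where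
  "op_exp_term \<gamma> A f z k = complex_of_real (\<gamma> ^ k / fact k) * poly ((A ^^ k) f) z"

definition op_exp :: "real \<Rightarrow> (complex poly \<Rightarrow> complex poly) \<Rightarrow> complex poly \<Rightarrow> complex \<Rightarrow> complex" where
  "op_exp \<gamma> A f z = (\<Sum>k. op_exp_term \<gamma> A f z k)"

definition expm1_div :: "real \<Rightarrow> real \<Rightarrow> real" where
  "expm1_div a \<omega> = (if \<omega> = 0 then a else (exp (a * \<omega>) - 1) / \<omega>)"

end

theory Submission imports Defs "HOL-Analysis.Analysis" "HOL-Computational_Algebra.Formal_Power_Series" begin

definition Eop :: "complex poly \<Rightarrow> complex poly" where
  "Eop h = [:0, 1:] * pderiv h"

lemma x_mult: "[:0, 1:] * p = pCons 0 (p::complex poly)"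
  by (simp add: mult_pCons_left)

lemma Eop_add: "Eop (g + h) = Eop g + Eop h"
  by (simp add: Eop_def pderiv_add algebra_simps)
lemma Eop_smult: "Eop (smult c g) = smult c (Eop g)"
  by (simp add: Eop_def pderiv_smult)
lemma Eop_0: "Eop 0 = 0" by (simp add: Eop_def)

lemma coeff_Dt: "coeff (Delta_t t g) m = (complex_of_real t + of_nat m) * of_nat (Suc m) * coeff g (Suc m)"
  by (cases m) (simp_all add: Delta_t_def coeff_pderiv algebra_simps)

lemma Dt_add: "Delta_t t (g + h) = Delta_t t g + Delta_t t h"
  by (rule poly_eqI) (simp add: coeff_Dt algebra_simps)
lemma Dt_smult: "Delta_t t (smult c g) = smult c (Delta_t t g)"
  by (rule poly_eqI) (simp add: coeff_Dt algebra_simps)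
lemma Dt_0: "Delta_t t 0 = 0" by (simp add: Delta_t_def)

lemma Dtp_add: "(Delta_t t ^^ j) (g + h) = (Delta_t t ^^ j) g + (Delta_t t ^^ j) h"
  by (induction j) (simp_all add: Dt_add)
lemma Dtp_smult: "(Delta_t t ^^ j) (smult c g) = smult c ((Delta_t t ^^ j) g)"
  by (induction j) (simp_all add: Dt_smult)
lemma Dtp_0: "(Delta_t t ^^ j) 0 = 0"
  by (induction j) (simp_all add: Dt_0)

lemma Ep_add: "(Eop ^^ j) (g + h) = (Eop ^^ j) g + (Eop ^^ j) h"
  by (induction j) (simp_all add: Eop_add)
lemma Ep_smult: "(Eop ^^ j) (smult c g) = smult c ((Eop ^^ j) g)"
  by (induction j) (simp_all add: Eop_smult)

lemma Dtw_split: "Delta_tw t w g = smult (complex_of_real w) (Eop g) + Delta_t t g"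
  by (simp add: Delta_tw_def Delta_t_def Eop_def algebra_simps)

lemma coeff_Eop: "coeff (Eop p) m = of_nat m * coeff p m"
  by (cases m) (simp_all add: Eop_def x_mult coeff_pderiv)

lemma comm1: "Delta_t t (Eop h) = Eop (Delta_t t h) + Delta_t t h"
  by (rule poly_eqI) (simp add: coeff_Dt coeff_Eop algebra_simps)

lemma commj: "(Delta_t t ^^ j) (Eop h) = Eop ((Delta_t t ^^ j) h) + smult (of_nat j) ((Delta_t t ^^ j) h)"
proof (induction j)
  case 0 then show ?case by simp
next
  case (Suc j)
  have "(Delta_t t ^^ Suc j) (Eop h) = Delta_t t (Eop ((Delta_t t ^^ j) h) + smult (of_nat j) ((Delta_t t ^^ j) h))"
    by (simp add: Suc)
  also have "\<dots> = Eop ((Delta_t t ^^ Suc j) h) + (Delta_t t ^^ Suc j) h + smult (of_nat j) ((Delta_t t ^^ Suc j) h)"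
    by (simp add: Dt_add Dt_smult comm1)
  also have "\<dots> = Eop ((Delta_t t ^^ Suc j) h) + smult (of_nat (Suc j)) ((Delta_t t ^^ Suc j) h)"
    by (simp add: smult_add_left)
  finally show ?case .
qed

lemma coeff_Ep: "coeff ((Eop ^^ k) p) m = of_nat m ^ k * coeff p m"
  by (induction k) (simp_all add: coeff_Eop)

lemma deg_Dt: "degree (Delta_t t g) \<le> degree g - 1"
  by (rule degree_le) (simp add: coeff_Dt coeff_eq_0)

lemma deg_Eop: "degree (Eop g) \<le> degree g"
  by (rule degree_le) (simp add: coeff_Eop coeff_eq_0)

lemma deg_Dtw: "degree (Delta_tw t w g) \<le> degree g"
  unfolding Dtw_split
  by (metis deg_Dt deg_Eop degree_add_le degree_smult_le diff_le_self le_trans)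

lemma Dtp_vanish: "degree g < j \<Longrightarrow> (Delta_t t ^^ j) g = 0"
proof (induction j arbitrary: g)
  case 0 then show ?case by simp
next
  case (Suc j)
  have "(Delta_t t ^^ Suc j) g = (Delta_t t ^^ j) (Delta_t t g)" by (simp add: funpow_Suc_right del: funpow.simps)
  also have "\<dots> = 0"
  proof (cases "degree g = 0")
    case True
    then have "pderiv g = 0" by (simp add: pderiv_eq_0_iff)
    then have "Delta_t t g = 0" by (simp add: Delta_t_def)
    then show ?thesis by (simp add: Dtp_0)
  next
    case False
    then show ?thesis using Suc deg_Dt[of t g] by (intro Suc.IH) simp
  qed
  finally show ?case .
qed


unbundle no vec_syntax
unbundle fps_syntax

definition Cw :: "complex \<Rightarrow> complex fps" where
  "Cw w = Abs_fps (\<lambda>n. if n = 0 then 0 else w ^ (n - 1) / fact n)"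

lemma Cw_deriv: "fps_deriv (Cw w) = fps_exp w"
proof (rule fps_ext)
  fix n
  have "fact (Suc n) = (of_nat (Suc n) :: complex) * fact n" by simp
  then show "fps_deriv (Cw w) $ n = fps_exp w $ n"
    by (simp add: Cw_def field_simps del: of_nat_Suc)
qed

lemma Ew_eq: "fps_exp w = 1 + fps_const w * Cw w"
proof (rule fps_ext)
  fix n show "fps_exp w $ n = (1 + fps_const w * Cw w) $ n"
    by (cases n) (simp_all add: Cw_def algebra_simps)
qed

lemma Cw_0: "Cw 0 = fps_X"
proof (rule fps_ext)
  fix n show "Cw 0 $ n = fps_X $ n"
    by (cases n) (auto simp: Cw_def)
qed

lemma Cw_ne: "w \<noteq> 0 \<Longrightarrow> Cw w = fps_const (1 / w) * (fps_exp w - 1)"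
  by (simp add: Ew_eq)

definition ent :: "complex fps \<Rightarrow> bool" where "ent F \<longleftrightarrow> fps_conv_radius F = \<infinity>"

lemma ent_add: "ent F \<Longrightarrow> ent G \<Longrightarrow> ent (F + G)"
  unfolding ent_def by (metis fps_conv_radius_add min.idem top.extremum_unique top_ereal_def)
lemma ent_diff: "ent F \<Longrightarrow> ent G \<Longrightarrow> ent (F - G)"
  unfolding ent_def by (metis fps_conv_radius_diff min.idem top.extremum_unique top_ereal_def)
lemma ent_mult: "ent F \<Longrightarrow> ent G \<Longrightarrow> ent (F * G)"
  unfolding ent_def by (metis fps_conv_radius_mult min.idem top.extremum_unique top_ereal_def)
lemma ent_power: "ent F \<Longrightarrow> ent (F ^ n)"
  unfolding ent_def by (metis fps_conv_radius_power top.extremum_unique top_ereal_def)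
lemma ent_const: "ent (fps_const c)" unfolding ent_def by simp
lemma ent_1: "ent 1" unfolding ent_def by simp
lemma ent_0: "ent 0" unfolding ent_def by simp
lemma ent_exp: "ent (fps_exp c)" unfolding ent_def by simp
lemma ent_sum: "(\<And>i. i \<in> A \<Longrightarrow> ent (f i)) \<Longrightarrow> ent (sum f A)"
  by (induction A rule: infinite_finite_induct) (auto intro: ent_add ent_0)

lemma ent_Cw: "ent (Cw w)"
proof (cases "w = 0")
  case True then show ?thesis by (simp add: Cw_0 ent_def)
next
  case False then show ?thesis unfolding Cw_ne[OF False]
    by (intro ent_mult ent_const ent_diff ent_exp ent_1)
qed

lemma eval_add: "ent F \<Longrightarrow> ent G \<Longrightarrow> eval_fps (F + G) x = eval_fps F x + eval_fps G x"
  unfolding ent_def by (intro eval_fps_add) auto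
lemma eval_mult: "ent F \<Longrightarrow> ent G \<Longrightarrow> eval_fps (F * G) x = eval_fps F x * eval_fps G x"
  unfolding ent_def by (intro eval_fps_mult) auto
lemma eval_diff: "ent F \<Longrightarrow> ent G \<Longrightarrow> eval_fps (F - G) x = eval_fps F x - eval_fps G x"
  unfolding ent_def by (intro eval_fps_diff) auto
lemma eval_power: "ent F \<Longrightarrow> eval_fps (F ^ n) x = eval_fps F x ^ n"
  unfolding ent_def by (intro eval_fps_power) auto
lemma eval_sum: "(\<And>i. i \<in> A \<Longrightarrow> ent (f i)) \<Longrightarrow> eval_fps (sum f A) x = (\<Sum>i\<in>A. eval_fps (f i) x)"
proof (induction A rule: infinite_finite_induct)
  case (insert a A)
  then show ?case by (simp add: eval_add ent_sum)
qed auto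

lemma eval_Cw: "eval_fps (Cw w) x = (if w = 0 then x else (exp (w * x) - 1) / w)"
proof (cases "w = 0")
  case True then show ?thesis by (simp add: Cw_0)
next
  case False then show ?thesis unfolding Cw_ne[OF False]
    by (simp add: eval_mult eval_diff ent_const ent_diff ent_exp ent_1)
qed

definition Psi :: "complex \<Rightarrow> complex \<Rightarrow> complex poly \<Rightarrow> complex fps" where
  "Psi w z g = Abs_fps (\<lambda>k. w ^ k / fact k * poly ((Eop ^^ k) g) z)"

lemma Psi_add: "Psi w z (g + h) = Psi w z g + Psi w z h"
  by (rule fps_ext) (simp add: Psi_def Ep_add algebra_simps)
lemma Psi_smult: "Psi w z (smult c g) = fps_const c * Psi w z g"
  by (rule fps_ext) (simp add: Psi_def Ep_smult algebra_simps)
lemma Psi_zero: "Psi w z 0 = 0"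
  using Psi_smult[of w z 0 0] by simp
lemma Psi_nth0: "Psi w z g $ 0 = poly g z"
  by (simp add: Psi_def)
lemma Psi_deriv: "fps_deriv (Psi w z g) = fps_const w * Psi w z (Eop g)"
proof (rule fps_ext)
  fix n
  have "fact (Suc n) = (of_nat (Suc n) :: complex) * fact n" by simp
  moreover have "(Eop ^^ Suc n) g = (Eop ^^ n) (Eop g)" by (simp only: funpow_Suc_right o_def)
  ultimately show "fps_deriv (Psi w z g) $ n = (fps_const w * Psi w z (Eop g)) $ n"
    by (simp add: Psi_def field_simps del: of_nat_Suc funpow.simps)
qed

lemma poly_le: fixes p :: "complex poly" assumes "degree p \<le> n" shows "poly p x = (\<Sum>i\<le>n. coeff p i * x ^ i)"
  unfolding poly_altdef
  by (rule sum.mono_neutral_left) (use assms in \<open>auto simp: coeff_eq_0\<close>)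

lemma deg_Ep: "degree ((Eop ^^ k) g) \<le> degree g"
  by (induction k) (auto intro: order.trans[OF deg_Eop])

lemma Psi_alt: "Psi w z g = (\<Sum>m\<le>degree g. fps_const (coeff g m * z ^ m) * fps_exp (w * of_nat m))"
proof (rule fps_ext)
  fix k
  have "Psi w z g $ k = w ^ k / fact k * (\<Sum>m\<le>degree g. coeff ((Eop ^^ k) g) m * z ^ m)"
    unfolding Psi_def by (simp add: poly_le[OF deg_Ep])
  also have "\<dots> = (\<Sum>m\<le>degree g. coeff g m * z ^ m * ((w * of_nat m) ^ k / fact k))"
    by (simp add: coeff_Ep sum_distrib_left power_mult_distrib field_simps)
  also have "\<dots> = (\<Sum>m\<le>degree g. fps_const (coeff g m * z ^ m) * fps_exp (w * of_nat m)) $ k"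
    by (simp add: fps_sum_nth)
  finally show "Psi w z g $ k = \<dots>" .
qed

lemma ent_Psi: "ent (Psi w z g)"
  unfolding Psi_alt by (intro ent_sum ent_mult ent_const ent_exp)

lemma eval_Psi: "eval_fps (Psi w z g) x = poly g (exp (w * x) * z)"
proof -
  have "eval_fps (Psi w z g) x = (\<Sum>m\<le>degree g. coeff g m * z ^ m * exp (w * of_nat m * x))"
    unfolding Psi_alt by (simp add: eval_sum eval_mult ent_mult ent_const ent_exp)
  also have "\<dots> = (\<Sum>m\<le>degree g. coeff g m * (exp (w * x) * z) ^ m)"
  proof (rule sum.cong[OF refl])
    fix m
    have "exp (w * of_nat m * x) = exp (w * x) ^ m"
      by (metis exp_of_nat_mult mult.commute mult.left_commute)
    then show "coeff g m * z ^ m * exp (w * of_nat m * x) = coeff g m * (exp (w * x) * z) ^ m"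
      by (simp add: power_mult_distrib)
  qed
  also have "\<dots> = poly g (exp (w * x) * z)" by (simp add: poly_altdef)
  finally show ?thesis .
qed


lemma fc_nat: "fps_const (w * of_nat x) = fps_const w * (of_nat x :: complex fps)"
  by (metis fps_const_mult fps_of_nat)

definition Phi :: "real \<Rightarrow> real \<Rightarrow> complex \<Rightarrow> nat \<Rightarrow> complex poly \<Rightarrow> complex fps" where
  "Phi t om z N g = (\<Sum>j<N. fps_const (1 / fact j) * Cw (complex_of_real om) ^ j *
      Psi (complex_of_real om) z ((Delta_t t ^^ j) g))"

lemma Phi_nth0: "N > 0 \<Longrightarrow> Phi t om z N g $ 0 = poly g z"
proof -
  assume "N > 0"
  have "Phi t om z N g $ 0 = (\<Sum>j<N. (fps_const (1 / fact j) * Cw (complex_of_real om) ^ j *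
      Psi (complex_of_real om) z ((Delta_t t ^^ j) g)) $ 0)"
    unfolding Phi_def by (simp add: fps_sum_nth)
  also have "\<dots> = (\<Sum>j\<in>{0}. (fps_const (1 / fact j) * Cw (complex_of_real om) ^ j *
      Psi (complex_of_real om) z ((Delta_t t ^^ j) g)) $ 0)"
    by (rule sum.mono_neutral_right) (use \<open>N > 0\<close> in \<open>auto simp: Cw_def\<close>)
  also have "\<dots> = poly g z" by (simp add: Psi_nth0)
  finally show ?thesis .
qed

lemma Phi_deriv:
  assumes N: "N = Suc M" and van: "(Delta_t t ^^ N) g = 0"
  shows "fps_deriv (Phi t om z N g) = Phi t om z N (Delta_tw t om g)"
proof -
  define w where "w = complex_of_real om"
  define C where "C = Cw w"
  define E where "E = fps_exp w"
  define T where "T j = (Delta_t t ^^ j) g" for j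
  define P where "P j = Psi w z (T j)" for j
  define Q where "Q j = Psi w z (Eop (T j))" for j
  define c where "c j = fps_const (1 / fact j :: complex)" for j
  have Phi_eq: "Phi t om z N g = (\<Sum>j<N. c j * C ^ j * P j)"
    unfolding Phi_def c_def C_def P_def T_def w_def ..
  have d: "fps_deriv (Phi t om z N g) =
     (\<Sum>j<N. c j * (of_nat j * C ^ (j - 1) * E * P j)) + (\<Sum>j<N. c j * C ^ j * (fps_const w * Q j))"
    unfolding Phi_eq fps_deriv_sum sum.distrib[symmetric]
    by (intro sum.cong refl) (simp add: c_def P_def Q_def Psi_deriv fps_deriv_power C_def Cw_deriv E_def fps_of_nat algebra_simps)
  have TD: "(Delta_t t ^^ j) (Delta_tw t om g) = smult w (Eop (T j)) + smult (w * of_nat j) (T j) + T (Suc j)" for j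
  proof -
    have "(Delta_t t ^^ j) (Delta_tw t om g) = smult w ((Delta_t t ^^ j) (Eop g)) + (Delta_t t ^^ j) (Delta_t t g)"
      by (simp add: Dtw_split Dtp_add Dtp_smult w_def)
    also have "(Delta_t t ^^ j) (Delta_t t g) = T (Suc j)"
      by (simp only: T_def funpow_Suc_right o_def)
    finally show ?thesis by (simp add: commj T_def smult_add_right)
  qed
  have r: "Phi t om z N (Delta_tw t om g) =
     (\<Sum>j<N. c j * C ^ j * (fps_const w * Q j)) + (\<Sum>j<N. c j * C ^ j * (fps_const w * of_nat j * P j))
       + (\<Sum>j<N. c j * C ^ j * P (Suc j))"
    unfolding Phi_def sum.distrib[symmetric] w_def[symmetric] C_def[symmetric]
    by (intro sum.cong refl) (simp add: TD Psi_add Psi_smult c_def P_def Q_def fps_of_nat fc_nat algebra_simps)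
  have term_eq: "of_nat j * C ^ (j - 1) * E = of_nat j * C ^ (j - 1) + fps_const w * of_nat j * C ^ j" for j
  proof (cases j)
    case 0 then show ?thesis by simp
  next
    case (Suc i)
    then show ?thesis by (simp add: E_def C_def Ew_eq algebra_simps)
  qed
  have l1: "(\<Sum>j<N. c j * (of_nat j * C ^ (j - 1) * E * P j)) =
      (\<Sum>j<N. c j * (of_nat j * C ^ (j - 1)) * P j) + (\<Sum>j<N. c j * C ^ j * (fps_const w * of_nat j * P j))"
    unfolding sum.distrib[symmetric] term_eq
    by (intro sum.cong refl) (simp add: algebra_simps)
  have cS: "c (Suc j) * of_nat (Suc j) = c j" for j
  proof -
    have "c (Suc j) * of_nat (Suc j) = fps_const (1 / fact (Suc j) * of_nat (Suc j))"
      unfolding c_def fps_of_nat[symmetric] fps_const_mult ..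
    also have "1 / fact (Suc j) * of_nat (Suc j) = (1 / fact j :: complex)"
      by (simp add: field_simps del: of_nat_Suc)
    finally show ?thesis by (simp add: c_def)
  qed
  have l2: "(\<Sum>j<N. c j * (of_nat j * C ^ (j - 1)) * P j) = (\<Sum>j<N. c j * C ^ j * P (Suc j))"
  proof -
    have "(\<Sum>j<N. c j * (of_nat j * C ^ (j - 1)) * P j) = (\<Sum>j<M. c (Suc j) * (of_nat (Suc j) * C ^ j) * P (Suc j))"
      unfolding N sum.lessThan_Suc_shift by simp
    also have "\<dots> = (\<Sum>j<M. c j * C ^ j * P (Suc j))"
      by (intro sum.cong refl) (metis cS mult.assoc)
    also have "\<dots> = (\<Sum>j<N. c j * C ^ j * P (Suc j))"
    proof -
      have "P (Suc M) = 0" unfolding P_def T_def using van unfolding N by (simp only: Psi_zero)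
      then show ?thesis unfolding N sum.lessThan_Suc by simp
    qed
    finally show ?thesis .
  qed
  show ?thesis unfolding d r l1 l2 by (simp only: add_ac)
qed

lemma Phi_nth:
  assumes "degree g < N"
  shows "Phi t om z N g $ k = poly ((Delta_tw t om ^^ k) g) z / fact k"
  using assms
proof (induction k arbitrary: g)
  case 0 then show ?case by (simp add: Phi_nth0)
next
  case (Suc k)
  obtain M where N: "N = Suc M" using Suc.prems by (cases N) auto
  have van: "(Delta_t t ^^ N) g = 0" using Suc.prems by (intro Dtp_vanish) simp
  have "Phi t om z N g $ Suc k = fps_deriv (Phi t om z N g) $ k / of_nat (Suc k)"
    by (simp add: fps_deriv_nth del: of_nat_Suc)
  also have "\<dots> = Phi t om z N (Delta_tw t om g) $ k / of_nat (Suc k)"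
    using Phi_deriv[OF N van] by simp
  also have "\<dots> = poly ((Delta_tw t om ^^ k) (Delta_tw t om g)) z / fact k / of_nat (Suc k)"
    using Suc.prems deg_Dtw[of t om g] by (subst Suc.IH) auto
  also have "\<dots> = poly ((Delta_tw t om ^^ Suc k) g) z / fact (Suc k)"
    by (simp only: funpow_Suc_right o_def) (simp add: field_simps del: of_nat_Suc)
  finally show ?case .
qed


lemma ent_Phi: "ent (Phi t om z N g)"
  unfolding Phi_def by (intro ent_sum ent_mult ent_const ent_power ent_Cw ent_Psi)

theorem lemma1:
  fixes \<theta> \<omega> a :: real and f :: "complex poly" and z :: complex
  assumes "\<theta> \<ge> 0"
  shows "op_exp_term a (Delta_tw \<theta> \<omega>) f z
           sums op_exp (expm1_div a \<omega>) (Delta_t \<theta>) f (complex_of_real (exp (a * \<omega>)) * z)"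
proof -
  define N where "N = Suc (degree f)"
  define P where "P = Phi \<theta> \<omega> z N f"
  define x where "x = complex_of_real a"
  define w where "w = complex_of_real \<omega>"
  define y where "y = complex_of_real (exp (a * \<omega>)) * z"
  have ew: "exp (w * x) = complex_of_real (exp (a * \<omega>))"
  proof -
    have "w * x = complex_of_real (a * \<omega>)" by (simp add: w_def x_def mult.commute)
    then show ?thesis by (simp only: exp_of_real)
  qed
  have eC: "eval_fps (Cw w) x = complex_of_real (expm1_div a \<omega>)"
    unfolding eval_Cw ew expm1_div_def by (simp add: w_def x_def)
  have termk: "op_exp_term a (Delta_tw \<theta> \<omega>) f z k = P $ k * x ^ k" for k
    unfolding op_exp_term_def P_def x_def
    by (subst Phi_nth) (simp_all add: N_def)
  have "(\<lambda>k. P $ k * x ^ k) sums eval_fps P x"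
    by (rule sums_eval_fps) (use ent_Phi in \<open>simp add: ent_def P_def\<close>)
  moreover have "eval_fps P x = (\<Sum>j<N. complex_of_real (expm1_div a \<omega> ^ j / fact j) * poly ((Delta_t \<theta> ^^ j) f) y)"
    unfolding P_def Phi_def
    by (simp add: eval_sum eval_mult eval_power ent_mult ent_const ent_power ent_Cw ent_Psi
        eval_Psi w_def[symmetric] eC ew y_def[symmetric])
  moreover have "op_exp (expm1_div a \<omega>) (Delta_t \<theta>) f y = (\<Sum>j<N. complex_of_real (expm1_div a \<omega> ^ j / fact j) * poly ((Delta_t \<theta> ^^ j) f) y)"
    unfolding op_exp_def op_exp_term_def
    by (rule suminf_finite) (auto simp: Dtp_vanish N_def)
  ultimately have "(\<lambda>k. P $ k * x ^ k) sums op_exp (expm1_div a \<omega>) (Delta_t \<theta>) f y"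
    by simp
  moreover have "op_exp_term a (Delta_tw \<theta> \<omega>) f z = (\<lambda>k. P $ k * x ^ k)"
    using termk by (intro ext) simp
  ultimately show ?thesis by (simp add: y_def)
qed

end
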